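(* Let $x=(x_1,\ldots,x_n)$ and $y=(y_1,\ldots,y_m)$ be observed samples, let $\mathbb{P}^{x,y}$ be the posterior distribution of the pair $(P_1,P_2)$ given $\mathcal{D}_{n,m}=\{x,y\}$. Let $d$ be a distance between probability measures, $M=\sup_{P_1,P_2} d(P_1,P_2)\in(0,\infty]$, let $w:[0,M)\to(0,\infty]$ be a probability density function on $[0,M)$ and $W(t)=\int_0^t w(\varepsilon)\,d\varepsilon$. Define $\mathrm{WIKS}(\mathcal{D}_{n,m})=\int_0^M w(\varepsilon)\,\mathbb{P}^{x,y}(d(P_1,P_2)>\varepsilon)\,d\varepsilon$. Then: (a) $0\le \mathrm{WIKS}(\mathcal{D}_{n,m})\le 1$ for every observed sample $\mathcal{D}_{n,m}$; (b) $\mathrm{WIKS}(\mathcal{D}_{n,m})=0$ if and only if $d(P_1,P_2)=0$ $\mathbb{P}^{x,y}$-almost surely; (c) $\mathrm{WIKS}(\mathcal{D}_{n,m})=1$ if and only if $d(P_1,P_2)=M$ $\mathbb{P}^{x,y}$-almost surely; (d) WIKS is increasing with respect to $d(P_1,P_2)$: if $\mathcal{D}$ and $\mathcal{D}'$ are two observed data sets such that the posterior distribution of $d(P_1,P_2)$ given $\mathcal{D}'$ is stochastically greater than that given $\mathcal{D}$, i.e. $\mathbb{P}^{\mathcal{D}}(d(P_1,P_2)\ge t)\le \mathbb{P}^{\mathcal{D}'}(d(P_1,P_2)\ge t)$ for all $t>0$, then $\mathrm{WIKS}(\mathcal{D})\le \mathrm{WIKS}(\mathcal{D}')$.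
   Context: Bayesian two-sample setting: $(P_1,P_2)$ is a random pair of probability distributions with some prior; conditionally on $(P_1,P_2)$, $x_1,\ldots,x_n$ are i.i.d. from $P_1$ and $y_1,\ldots,y_m$ are i.i.d. from $P_2$, independently. $\mathbb{P}^{\mathcal{D}}$ denotes the posterior given data $\mathcal{D}$. *)

theory Defs
  imports "HOL-Probability.Probability"
begin

definition param_space :: "'a measure \<Rightarrow> ('a measure \<times> 'a measure) measure" where
  "param_space X = prob_algebra X \<Otimes>\<^sub>M prob_algebra X"

definition is_distance :: "'a measure \<Rightarrow> ('a measure \<Rightarrow> 'a measure \<Rightarrow> real) \<Rightarrow> bool" where
  "is_distance X d \<longleftrightarrow>
     (\<forall>P\<in>space (prob_algebra X). \<forall>Q\<in>space (prob_algebra X).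
        d P Q \<ge> 0 \<and> d P Q = d Q P \<and> (d P Q = 0 \<longleftrightarrow> P = Q)) \<and>
     (\<forall>P\<in>space (prob_algebra X). \<forall>Q\<in>space (prob_algebra X). \<forall>R\<in>space (prob_algebra X).
        d P R \<le> d P Q + d Q R)"

definition sup_dist :: "'a measure \<Rightarrow> ('a measure \<Rightarrow> 'a measure \<Rightarrow> real) \<Rightarrow> ennreal" where
  "sup_dist X d = (SUP P1\<in>space (prob_algebra X). SUP P2\<in>space (prob_algebra X). ennreal (d P1 P2))"

definition dom_w :: "ennreal \<Rightarrow> real set" where
  "dom_w M = {\<epsilon>::real. 0 \<le> \<epsilon> \<and> ennreal \<epsilon> < M}"

definition WIKS :: "('a measure \<Rightarrow> 'a measure \<Rightarrow> real) \<Rightarrow> (real \<Rightarrow> ennreal) \<Rightarrow> ennreal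
      \<Rightarrow> ('a measure \<times> 'a measure) measure \<Rightarrow> ennreal" where
  "WIKS d w M Q = (\<integral>\<^sup>+ \<epsilon>. indicator (dom_w M) \<epsilon> * w \<epsilon> *
        emeasure Q {\<theta>\<in>space Q. d (fst \<theta>) (snd \<theta>) > \<epsilon>} \<partial>lborel)"

end

theory Submission
  imports Defs
begin

lemma ae_point:
  assumes "AE x in lborel. P x" "a < (b::real)"
  shows "\<exists>x. a < x \<and> x < b \<and> P x"
proof (rule ccontr)
  assume nx: "\<not> ?thesis"
  from assms(1) obtain N where N: "N \<in> null_sets lborel" "{x\<in>space lborel. \<not> P x} \<subseteq> N"
    by (metis AE_E null_setsI)
  have "{a<..<b} \<subseteq> N" using N nx by auto
  then have "emeasure lborel {a<..<b} \<le> emeasure lborel N"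
    by (intro emeasure_mono) (use N in auto)
  then show False using N assms(2) by (simp add: null_setsD1)
qed

context
  fixes Q :: "'t measure" and f :: "'t \<Rightarrow> real" and M :: ennreal and w :: "real \<Rightarrow> ennreal"
  assumes Qp: "prob_space Q" and fm: "f \<in> borel_measurable Q"
    and f0: "\<And>\<theta>. \<theta> \<in> space Q \<Longrightarrow> 0 \<le> f \<theta>"
    and fM: "\<And>\<theta>. \<theta> \<in> space Q \<Longrightarrow> ennreal (f \<theta>) \<le> M"
    and Mpos: "M > 0" and wm: "w \<in> borel_measurable lborel"
    and wpos: "\<And>e. e \<in> dom_w M \<Longrightarrow> w e > 0"
    and wd: "(\<integral>\<^sup>+ e. indicator (dom_w M) e * w e \<partial>lborel) = 1"
begin


lemma setgt: "{\<theta>\<in>space Q. e < f \<theta>} \<in> sets Q"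
  using fm by measurable

lemma setle: "{\<theta>\<in>space Q. f \<theta> \<le> e} \<in> sets Q"
  using fm by measurable

lemma setge: "{\<theta>\<in>space Q. e \<le> f \<theta>} \<in> sets Q"
  using fm by measurable

lemma G_meas: "(\<lambda>e. emeasure Q {\<theta>\<in>space Q. e < f \<theta>}) \<in> borel_measurable borel"
proof -
  interpret prob_space Q by (rule Qp)
  define g where "g = (\<lambda>e. - measure Q {\<theta>\<in>space Q. e < f \<theta>})"
  have "mono g"
  proof (rule monoI)
    fix x y :: real assume "x \<le> y"
    then have "measure Q {\<theta>\<in>space Q. y < f \<theta>} \<le> measure Q {\<theta>\<in>space Q. x < f \<theta>}"
      by (intro finite_measure_mono setgt) auto
    then show "g x \<le> g y" by (simp add: g_def)
  qed
  then have gm: "g \<in> borel_measurable borel" by (rule borel_measurable_mono)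
  have "(\<lambda>e. ennreal (- g e)) \<in> borel_measurable borel"
    using gm by measurable
  moreover have "(\<lambda>e. ennreal (- g e)) = (\<lambda>e. emeasure Q {\<theta>\<in>space Q. e < f \<theta>})"
    by (auto simp: g_def emeasure_eq_measure)
  ultimately show ?thesis by simp
qed

lemma dom_w_meas: "dom_w M \<in> sets borel"
proof -
  have "dom_w M = {0..} \<inter> {e. ennreal e < M}" by (auto simp: dom_w_def)
  moreover have "{e::real. ennreal e < M} \<in> sets borel" by measurable
  ultimately show ?thesis by auto
qed


lemma H_meas: "(\<lambda>e. emeasure Q {\<theta>\<in>space Q. f \<theta> \<le> e}) \<in> borel_measurable borel"
proof -
  interpret prob_space Q by (rule Qp)
  define g where "g = (\<lambda>e. measure Q {\<theta>\<in>space Q. f \<theta> \<le> e})"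
  have "mono g"
  proof (rule monoI)
    fix x y :: real assume "x \<le> y"
    then show "g x \<le> g y" unfolding g_def
      by (intro finite_measure_mono setle) auto
  qed
  then have gm: "g \<in> borel_measurable borel" by (rule borel_measurable_mono)
  have "(\<lambda>e. ennreal (g e)) \<in> borel_measurable borel"
    using gm by measurable
  moreover have "(\<lambda>e. ennreal (g e)) = (\<lambda>e. emeasure Q {\<theta>\<in>space Q. f \<theta> \<le> e})"
    by (auto simp: g_def emeasure_eq_measure)
  ultimately show ?thesis by simp
qed

lemma intG_meas: "(\<lambda>e. indicator (dom_w M) e * w e * emeasure Q {\<theta>\<in>space Q. e < f \<theta>}) \<in> borel_measurable lborel"
  using G_meas wm dom_w_meas
  by (auto intro!: borel_measurable_times_ennreal borel_measurable_indicator simp: measurable_lborel1)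

lemma intH_meas: "(\<lambda>e. indicator (dom_w M) e * w e * emeasure Q {\<theta>\<in>space Q. f \<theta> \<le> e}) \<in> borel_measurable lborel"
  using H_meas wm dom_w_meas
  by (auto intro!: borel_measurable_times_ennreal borel_measurable_indicator simp: measurable_lborel1)

lemma partA: "(\<integral>\<^sup>+ e. indicator (dom_w M) e * w e * emeasure Q {\<theta>\<in>space Q. e < f \<theta>} \<partial>lborel) \<le> 1"
proof -
  interpret prob_space Q by (rule Qp)
  have "(\<integral>\<^sup>+ e. indicator (dom_w M) e * w e * emeasure Q {\<theta>\<in>space Q. e < f \<theta>} \<partial>lborel)
     \<le> (\<integral>\<^sup>+ e. indicator (dom_w M) e * w e \<partial>lborel)"
    by (intro nn_integral_mono) (auto intro!: mult_left_le emeasure_le_1)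
  then show ?thesis using wd by simp
qed

lemma small_pos: obtains zr where "0 < zr" "ennreal zr < M"
proof -
  obtain z where z: "0 < z" "z < M" using Mpos dense by blast
  then have "z \<noteq> top" using top.not_eq_extremum by fastforce
  then obtain zr where "z = ennreal zr" "0 \<le> zr" by (cases z) auto
  then show ?thesis using that z by auto
qed

lemma between: assumes "0 \<le> r" "ennreal r < M" obtains zr where "r < zr" "ennreal zr < M"
proof -
  obtain z where z: "ennreal r < z" "z < M" using assms dense by blast
  then have "z \<noteq> top" using top.not_eq_extremum by fastforce
  then obtain zr where "z = ennreal zr" "0 \<le> zr" by (cases z) auto
  then show ?thesis using that z assms by (auto simp: ennreal_less_iff)
qed

lemma partB: "(\<integral>\<^sup>+ e. indicator (dom_w M) e * w e * emeasure Q {\<theta>\<in>space Q. e < f \<theta>} \<partial>lborel) = 0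
   \<longleftrightarrow> (AE \<theta> in Q. f \<theta> = 0)"
proof
  assume "(\<integral>\<^sup>+ e. indicator (dom_w M) e * w e * emeasure Q {\<theta>\<in>space Q. e < f \<theta>} \<partial>lborel) = 0"
  then have ae: "AE e in lborel. indicator (dom_w M) e * w e * emeasure Q {\<theta>\<in>space Q. e < f \<theta>} = 0"
    using nn_integral_0_iff_AE[OF intG_meas] by simp
  obtain zr where zr: "0 < zr" "ennreal zr < M" by (rule small_pos)
  have "AE \<theta> in Q. f \<theta> \<le> 1 / Suc n" for n
  proof -
    have "0 < min (1 / Suc n) zr" using zr by simp
    from ae_point[OF ae this] obtain e where e: "0 < e" "e < min (1 / Suc n) zr"
      "indicator (dom_w M) e * w e * emeasure Q {\<theta>\<in>space Q. e < f \<theta>} = 0" by blast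
    have "ennreal e < ennreal zr" using e zr by (auto intro!: ennreal_lessI)
    then have ed: "e \<in> dom_w M" using e zr unfolding dom_w_def by auto
    then have "emeasure Q {\<theta>\<in>space Q. e < f \<theta>} = 0" using e(3) wpos[OF ed] by auto
    then show ?thesis
      by (intro AE_I'[of "{\<theta>\<in>space Q. e < f \<theta>}"]) (use e setgt in auto)
  qed
  then have "AE \<theta> in Q. \<forall>n. f \<theta> \<le> 1 / Suc n" by (simp add: AE_all_countable)
  moreover have "AE \<theta> in Q. \<theta> \<in> space Q" by (rule AE_space)
  ultimately show "AE \<theta> in Q. f \<theta> = 0"
  proof eventually_elim
    case (elim \<theta>)
    then have th: "\<theta> \<in> space Q" "\<forall>n. f \<theta> \<le> 1 / Suc n" by auto
    show "f \<theta> = 0"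
    proof (rule ccontr)
      assume "f \<theta> \<noteq> 0" then have "f \<theta> > 0" using f0[OF th(1)] by simp
      then obtain n where "1 / Suc n < f \<theta>" using reals_Archimedean by (metis inverse_eq_divide)
      then show False using th(2) by (meson not_le)
    qed
  qed
next
  assume ae: "AE \<theta> in Q. f \<theta> = 0"
  have n0: "emeasure Q {\<theta>\<in>space Q. f \<theta> \<noteq> 0} = 0"
  proof -
    have "{\<theta>\<in>space Q. f \<theta> \<noteq> 0} \<in> sets Q" using fm by measurable
    from AE_iff_measurable[OF this, of "\<lambda>\<theta>. f \<theta> = 0"] ae show ?thesis by simp
  qed
  have z: "indicator (dom_w M) e * w e * emeasure Q {\<theta>\<in>space Q. e < f \<theta>} = 0" for e
  proof (cases "e \<in> dom_w M")
    case True
    then have "e \<ge> 0" by (simp add: dom_w_def)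
    then have "emeasure Q {\<theta>\<in>space Q. e < f \<theta>} \<le> emeasure Q {\<theta>\<in>space Q. f \<theta> \<noteq> 0}"
      by (intro emeasure_mono) (use fm in auto)
    then show ?thesis using n0 by simp
  qed simp
  show "(\<integral>\<^sup>+ e. indicator (dom_w M) e * w e * emeasure Q {\<theta>\<in>space Q. e < f \<theta>} \<partial>lborel) = 0"
    unfolding z by simp
qed


lemma sumGH: "(\<integral>\<^sup>+ e. indicator (dom_w M) e * w e * emeasure Q {\<theta>\<in>space Q. e < f \<theta>} \<partial>lborel)
  + (\<integral>\<^sup>+ e. indicator (dom_w M) e * w e * emeasure Q {\<theta>\<in>space Q. f \<theta> \<le> e} \<partial>lborel) = 1"
proof -
  interpret prob_space Q by (rule Qp)
  have c: "emeasure Q {\<theta>\<in>space Q. e < f \<theta>} + emeasure Q {\<theta>\<in>space Q. f \<theta> \<le> e} = 1" for e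
  proof -
    have "emeasure Q {\<theta>\<in>space Q. e < f \<theta>} + emeasure Q {\<theta>\<in>space Q. f \<theta> \<le> e}
       = emeasure Q ({\<theta>\<in>space Q. e < f \<theta>} \<union> {\<theta>\<in>space Q. f \<theta> \<le> e})"
      by (intro plus_emeasure setgt setle) auto
    also have "{\<theta>\<in>space Q. e < f \<theta>} \<union> {\<theta>\<in>space Q. f \<theta> \<le> e} = space Q" by auto
    finally show ?thesis by (simp add: emeasure_space_1)
  qed
  have "(\<integral>\<^sup>+ e. indicator (dom_w M) e * w e * emeasure Q {\<theta>\<in>space Q. e < f \<theta>} \<partial>lborel)
  + (\<integral>\<^sup>+ e. indicator (dom_w M) e * w e * emeasure Q {\<theta>\<in>space Q. f \<theta> \<le> e} \<partial>lborel)
   = (\<integral>\<^sup>+ e. indicator (dom_w M) e * w e * emeasure Q {\<theta>\<in>space Q. e < f \<theta>}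
       + indicator (dom_w M) e * w e * emeasure Q {\<theta>\<in>space Q. f \<theta> \<le> e} \<partial>lborel)"
    by (rule nn_integral_add[symmetric, OF intG_meas intH_meas])
  also have "\<dots> = (\<integral>\<^sup>+ e. indicator (dom_w M) e * w e \<partial>lborel)"
    by (intro nn_integral_cong) (simp add: distrib_left[symmetric] c)
  finally show ?thesis using wd by simp
qed

lemma partC: "(\<integral>\<^sup>+ e. indicator (dom_w M) e * w e * emeasure Q {\<theta>\<in>space Q. e < f \<theta>} \<partial>lborel) = 1
   \<longleftrightarrow> (AE \<theta> in Q. ennreal (f \<theta>) = M)"
proof -
  let ?I = "(\<integral>\<^sup>+ e. indicator (dom_w M) e * w e * emeasure Q {\<theta>\<in>space Q. e < f \<theta>} \<partial>lborel)"
  let ?J = "(\<integral>\<^sup>+ e. indicator (dom_w M) e * w e * emeasure Q {\<theta>\<in>space Q. f \<theta> \<le> e} \<partial>lborel)"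
  have s: "?I + ?J = 1" by (rule sumGH)
  have "?I = 1 \<longleftrightarrow> ?J = 0"
  proof
    assume "?I = 1" then have "1 + ?J = 1 + 0" using s by simp
    then show "?J = 0" unfolding ennreal_add_left_cancel by simp
  next
    assume "?J = 0" then show "?I = 1" using s by simp
  qed
  also have "\<dots> \<longleftrightarrow> (AE \<theta> in Q. ennreal (f \<theta>) = M)"
  proof
    assume "?J = 0"
    then have ae: "AE e in lborel. indicator (dom_w M) e * w e * emeasure Q {\<theta>\<in>space Q. f \<theta> \<le> e} = 0"
      using nn_integral_0_iff_AE[OF intH_meas] by simp
    have "AE \<theta> in Q. (0 \<le> r \<and> ennreal r < M \<longrightarrow> r < f \<theta>)" for r
    proof (cases "0 \<le> r \<and> ennreal r < M")
      case True
      then obtain zr where zr: "r < zr" "ennreal zr < M" using between by blast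
      from ae_point[OF ae zr(1)] obtain e where e: "r < e" "e < zr"
        "indicator (dom_w M) e * w e * emeasure Q {\<theta>\<in>space Q. f \<theta> \<le> e} = 0" by blast
      have "ennreal e < ennreal zr" using e True by (auto intro!: ennreal_lessI)
      then have ed: "e \<in> dom_w M" using e zr True unfolding dom_w_def by auto
      then have "emeasure Q {\<theta>\<in>space Q. f \<theta> \<le> e} = 0" using e(3) wpos[OF ed] by auto
      then show ?thesis
        by (intro AE_I'[of "{\<theta>\<in>space Q. f \<theta> \<le> e}"]) (use e setle in auto)
    next
      case False then show ?thesis by (intro AE_I2) blast
    qed
    then have "AE \<theta> in Q. \<forall>r\<in>\<rat>. (0 \<le> r \<and> ennreal r < M \<longrightarrow> r < f \<theta>)"
      by (subst AE_ball_countable) (auto simp: countable_rat)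
    moreover have "AE \<theta> in Q. \<theta> \<in> space Q" by (rule AE_space)
    ultimately show "AE \<theta> in Q. ennreal (f \<theta>) = M"
    proof eventually_elim
      case (elim \<theta>)
      then have th: "\<theta> \<in> space Q" "\<forall>r\<in>\<rat>. (0 \<le> r \<and> ennreal r < M \<longrightarrow> r < f \<theta>)" by auto
      show "ennreal (f \<theta>) = M"
      proof (rule ccontr)
        assume "ennreal (f \<theta>) \<noteq> M"
        then have lt: "ennreal (f \<theta>) < M" using fM[OF th(1)] by simp
        obtain zr where zr: "f \<theta> < zr" "ennreal zr < M" using between[OF f0[OF th(1)] lt] by blast
        obtain r where r: "r \<in> \<rat>" "f \<theta> < r" "r < zr" using Rats_dense_in_real[OF zr(1)] by blast
        have "0 \<le> r" using r f0[OF th(1)] by simp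
        moreover have "ennreal r < M" using r zr
          by (metis ennreal_leI less_imp_le order_le_less_trans)
        ultimately have "r < f \<theta>" using th(2) r(1) by blast
        then show False using r by simp
      qed
    qed
  next
    assume ae: "AE \<theta> in Q. ennreal (f \<theta>) = M"
    have n0: "emeasure Q {\<theta>\<in>space Q. ennreal (f \<theta>) \<noteq> M} = 0"
    proof -
      have "{\<theta>\<in>space Q. ennreal (f \<theta>) \<noteq> M} \<in> sets Q" using fm by measurable
      from AE_iff_measurable[OF this, of "\<lambda>\<theta>. ennreal (f \<theta>) = M"] ae show ?thesis by simp
    qed
    have z: "indicator (dom_w M) e * w e * emeasure Q {\<theta>\<in>space Q. f \<theta> \<le> e} = 0" for e
    proof (cases "e \<in> dom_w M")
      case True
      then have e: "e \<ge> 0" "ennreal e < M" by (auto simp add: dom_w_def)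
      have "{\<theta>\<in>space Q. f \<theta> \<le> e} \<subseteq> {\<theta>\<in>space Q. ennreal (f \<theta>) \<noteq> M}"
        using e by (auto dest: ennreal_leI)
      then have "emeasure Q {\<theta>\<in>space Q. f \<theta> \<le> e} \<le> emeasure Q {\<theta>\<in>space Q. ennreal (f \<theta>) \<noteq> M}"
        by (intro emeasure_mono) (use fm in auto)
      then show ?thesis using n0 by simp
    qed simp
    show "?J = 0" unfolding z by simp
  qed
  finally show ?thesis .
qed

lemma partD:
  assumes Qp': "prob_space Q'" and fm': "f \<in> borel_measurable Q'"
    and hyp: "\<forall>t>0. emeasure Q {\<theta>\<in>space Q. f \<theta> \<ge> t} \<le> emeasure Q' {\<theta>\<in>space Q'. f \<theta> \<ge> t}"
  shows "(\<integral>\<^sup>+ e. indicator (dom_w M) e * w e * emeasure Q {\<theta>\<in>space Q. e < f \<theta>} \<partial>lborel)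
    \<le> (\<integral>\<^sup>+ e. indicator (dom_w M) e * w e * emeasure Q' {\<theta>\<in>space Q'. e < f \<theta>} \<partial>lborel)"
proof (intro nn_integral_mono)
  fix e
  show "indicator (dom_w M) e * w e * emeasure Q {\<theta>\<in>space Q. e < f \<theta>}
     \<le> indicator (dom_w M) e * w e * emeasure Q' {\<theta>\<in>space Q'. e < f \<theta>}"
  proof (cases "e \<in> dom_w M")
    case True
    then have e0: "e \<ge> 0" by (simp add: dom_w_def)
    define A where "A = (\<lambda>n::nat. {\<theta>\<in>space Q. e + 1 / Suc n \<le> f \<theta>})"
    have Asets: "range A \<subseteq> sets Q" unfolding A_def using setge by auto
    have inc: "incseq A"
    proof (rule incseq_SucI)
      fix n
      have "1 / real (Suc (Suc n)) \<le> 1 / real (Suc n)" by (simp add: frac_le)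
      then show "A n \<subseteq> A (Suc n)" unfolding A_def by auto
    qed
    have U: "(\<Union>n. A n) = {\<theta>\<in>space Q. e < f \<theta>}"
    proof
      have p: "0 < 1 / real (Suc n)" for n by simp
      show "(\<Union>n. A n) \<subseteq> {\<theta>\<in>space Q. e < f \<theta>}" unfolding A_def
        using p by (auto intro: less_le_trans[rotated])
    next
      show "{\<theta>\<in>space Q. e < f \<theta>} \<subseteq> (\<Union>n. A n)"
      proof
        fix \<theta> assume th: "\<theta> \<in> {\<theta>\<in>space Q. e < f \<theta>}"
        then have "0 < f \<theta> - e" by simp
        then obtain n where "inverse (real (Suc n)) < f \<theta> - e" using reals_Archimedean by blast
        then have "\<theta> \<in> A n" using th unfolding A_def by (simp add: inverse_eq_divide)
        then show "\<theta> \<in> (\<Union>n. A n)" by blast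
      qed
    qed
    have "emeasure Q {\<theta>\<in>space Q. e < f \<theta>} = (SUP n. emeasure Q (A n))"
      using SUP_emeasure_incseq[OF Asets inc] U by simp
    also have "\<dots> \<le> emeasure Q' {\<theta>\<in>space Q'. e < f \<theta>}"
    proof (rule SUP_least)
      fix n :: nat
      have p: "0 < 1 / real (Suc n)" by simp
      have "0 < e + 1 / Suc n" using e0 p by linarith
      from hyp[rule_format, OF this]
      have "emeasure Q (A n) \<le> emeasure Q' {\<theta>\<in>space Q'. e + 1 / Suc n \<le> f \<theta>}"
        unfolding A_def .
      also have "\<dots> \<le> emeasure Q' {\<theta>\<in>space Q'. e < f \<theta>}"
      proof (rule emeasure_mono)
        show "{\<theta>\<in>space Q'. e < f \<theta>} \<in> sets Q'" using fm' by measurable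
        show "{\<theta>\<in>space Q'. e + 1 / Suc n \<le> f \<theta>} \<subseteq> {\<theta>\<in>space Q'. e < f \<theta>}"
        proof
          fix x assume "x \<in> {\<theta>\<in>space Q'. e + 1 / Suc n \<le> f \<theta>}"
          then have "x \<in> space Q'" "e + 1 / Suc n \<le> f x" by auto
          then show "x \<in> {\<theta>\<in>space Q'. e < f \<theta>}" using p by (simp only: mem_Collect_eq simp_thms)
        qed
      qed
      finally show "emeasure Q (A n) \<le> emeasure Q' {\<theta>\<in>space Q'. e < f \<theta>}" .
    qed
    finally show ?thesis by (intro mult_left_mono) auto
  qed simp
qed

end
theorem theorem2:
  fixes X :: "'a measure"
    and d :: "'a measure \<Rightarrow> 'a measure \<Rightarrow> real"
    and w :: "real \<Rightarrow> ennreal"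
    and post :: "'d \<Rightarrow> ('a measure \<times> 'a measure) measure"
  assumes dist: "is_distance X d"
    and d_meas: "(\<lambda>\<theta>. d (fst \<theta>) (snd \<theta>)) \<in> borel_measurable (param_space X)"
    and M_pos: "sup_dist X d > 0"
    and w_meas: "w \<in> borel_measurable lborel"
    and w_pos: "\<And>\<epsilon>. \<epsilon> \<in> dom_w (sup_dist X d) \<Longrightarrow> w \<epsilon> > 0"
    and w_density: "(\<integral>\<^sup>+ \<epsilon>. indicator (dom_w (sup_dist X d)) \<epsilon> * w \<epsilon> \<partial>lborel) = 1"
    and post_prob: "\<And>D. prob_space (post D)"
    and post_sets: "\<And>D. sets (post D) = sets (param_space X)"
  shows "(\<forall>D. 0 \<le> WIKS d w (sup_dist X d) (post D) \<and> WIKS d w (sup_dist X d) (post D) \<le> 1)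
    \<and> (\<forall>D. WIKS d w (sup_dist X d) (post D) = 0 \<longleftrightarrow>
            (AE \<theta> in post D. d (fst \<theta>) (snd \<theta>) = 0))
    \<and> (\<forall>D. WIKS d w (sup_dist X d) (post D) = 1 \<longleftrightarrow>
            (AE \<theta> in post D. ennreal (d (fst \<theta>) (snd \<theta>)) = sup_dist X d))
    \<and> (\<forall>D D'. (\<forall>t>0. emeasure (post D) {\<theta>\<in>space (post D). d (fst \<theta>) (snd \<theta>) \<ge> t}
                    \<le> emeasure (post D') {\<theta>\<in>space (post D'). d (fst \<theta>) (snd \<theta>) \<ge> t})
            \<longrightarrow> WIKS d w (sup_dist X d) (post D) \<le> WIKS d w (sup_dist X d) (post D'))"
  proof -
  define M where "M = sup_dist X d"
  define f where "f = (\<lambda>\<theta>::'a measure \<times> 'a measure. d (fst \<theta>) (snd \<theta>))"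
  have W: "WIKS d w M Q = (\<integral>\<^sup>+ e. indicator (dom_w M) e * w e * emeasure Q {\<theta>\<in>space Q. e < f \<theta>} \<partial>lborel)" for Q
    unfolding WIKS_def f_def by simp
  have sp: "space (post D) = space (prob_algebra X) \<times> space (prob_algebra X)" for D
    using sets_eq_imp_space_eq[OF post_sets[of D]] by (simp add: param_space_def space_pair_measure)
  have fm: "f \<in> borel_measurable (post D)" for D
    using d_meas unfolding f_def by (simp add: measurable_cong_sets[OF post_sets refl])
  have f0: "\<And>\<theta>. \<theta> \<in> space (post D) \<Longrightarrow> 0 \<le> f \<theta>" for D
    using dist unfolding is_distance_def f_def sp by auto
  have fM: "\<And>\<theta>. \<theta> \<in> space (post D) \<Longrightarrow> ennreal (f \<theta>) \<le> M" for D
    unfolding sp M_def sup_dist_def f_def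
  proof (clarsimp)
    fix a b assume ab: "a \<in> space (prob_algebra X)" "b \<in> space (prob_algebra X)"
    have "ennreal (d a b) \<le> (SUP P2\<in>space (prob_algebra X). ennreal (d a P2))"
      using ab(2) by (rule SUP_upper)
    also have "\<dots> \<le> (SUP P1\<in>space (prob_algebra X). SUP P2\<in>space (prob_algebra X). ennreal (d P1 P2))"
      using ab(1) by (rule SUP_upper)
    finally show "ennreal (d a b) \<le> (SUP P1\<in>space (prob_algebra X). SUP P2\<in>space (prob_algebra X). ennreal (d P1 P2))" .
  qed
  note L = partA[OF post_prob fm f0 fM M_pos[folded M_def] w_meas w_pos[folded M_def] w_density[folded M_def]]
    partB[OF post_prob fm f0 fM M_pos[folded M_def] w_meas w_pos[folded M_def] w_density[folded M_def]]
    partC[OF post_prob fm f0 fM M_pos[folded M_def] w_meas w_pos[folded M_def] w_density[folded M_def]]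
    partD[OF post_prob fm f0 fM M_pos[folded M_def] w_meas w_pos[folded M_def] w_density[folded M_def] post_prob fm]
  show ?thesis
    unfolding M_def[symmetric] W using L unfolding f_def by auto
qed

end
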